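(* Let $C\subseteq\mathbb{S}$ be a nonempty closed s-convex set. Then $\operatorname{sext}C\neq\emptyset$, $\operatorname{sext}C$ is hull-addible, and $C=\operatorname{sco}(\operatorname{sext}C)$.
   Context: Standing setting: $n\ge 2$; $o$ denotes the zero vector of $\mathbb{R}^n$. $\Phi:\mathbb{R}^n\to\mathbb{R}_+:=[0,\infty)$ is a continuous function with $\Phi(tx)=t\Phi(x)$ for all $x\in\mathbb{R}^n$, $t\ge 0$, and $\Phi(x)=0$ iff $x=o$. Set $\mathbb{S}:=\{x\in\mathbb{R}^n\mid \Phi(x)=1\}$ (with the topology induced from $\mathbb{R}^n$) and $\rho:\mathbb{R}^n\to\{o\}\cup\mathbb{S}$, $\rho(x):=x/\Phi(x)$ for $x\neq o$, $\rho(o):=o$. For $x,y\in\mathbb{S}$, $\lambda\in[0,1]$, $\lambda x+_s(1-\lambda)y:=\rho(\lambda x+(1-\lambda)y)$. A nonempty set $S\subseteq\mathbb{S}$ is called s-convex if $\lambda x+_s(1-\lambda)y\in S$ for all $x,y\in S$ and $\lambda\in[0,1]$. For s-convex $C$, a point $x\in C$ is an s-extreme point of $C$ if whenever $x_1,x_2\in C$, $\lambda\in(0,1)$ and $x=\lambda x_1+_s(1-\lambda)x_2$, then $x_1=x_2$; $\operatorname{sext}C$ denotes the set of s-extreme points of $C$. A nonempty set $S\subseteq\mathbb{S}$ is hull-addible if $o\notin\operatorname{conv}S$; for such $S$, $\operatorname{sco}S:=\rho(\operatorname{conv}S)$. *)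

theory Defs
  imports "HOL-Analysis.Analysis"
begin

definition sph :: "('a::euclidean_space \<Rightarrow> real) \<Rightarrow> 'a set" where
  "sph \<Phi> = {x. \<Phi> x = 1}"

definition rho :: "('a::euclidean_space \<Rightarrow> real) \<Rightarrow> 'a \<Rightarrow> 'a" where
  "rho \<Phi> x = (if x = 0 then 0 else x /\<^sub>R \<Phi> x)"

definition scomb :: "('a::euclidean_space \<Rightarrow> real) \<Rightarrow> real \<Rightarrow> 'a \<Rightarrow> 'a \<Rightarrow> 'a" where
  "scomb \<Phi> l x y = rho \<Phi> (l *\<^sub>R x + (1 - l) *\<^sub>R y)"

definition s_convex :: "('a::euclidean_space \<Rightarrow> real) \<Rightarrow> 'a set \<Rightarrow> bool" where
  "s_convex \<Phi> S \<longleftrightarrow> S \<noteq> {} \<and> S \<subseteq> sph \<Phi> \<and>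
     (\<forall>x\<in>S. \<forall>y\<in>S. \<forall>l\<in>{0..1}. scomb \<Phi> l x y \<in> S)"

definition sext :: "('a::euclidean_space \<Rightarrow> real) \<Rightarrow> 'a set \<Rightarrow> 'a set" where
  "sext \<Phi> C = {x \<in> C. \<forall>x1\<in>C. \<forall>x2\<in>C. \<forall>l\<in>{0<..<1}.
      x = scomb \<Phi> l x1 x2 \<longrightarrow> x1 = x2}"

definition hull_addible :: "('a::euclidean_space \<Rightarrow> real) \<Rightarrow> 'a set \<Rightarrow> bool" where
  "hull_addible \<Phi> S \<longleftrightarrow> S \<noteq> {} \<and> S \<subseteq> sph \<Phi> \<and> 0 \<notin> convex hull S"

definition sco :: "('a::euclidean_space \<Rightarrow> real) \<Rightarrow> 'a set \<Rightarrow> 'a set" where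
  "sco \<Phi> S = rho \<Phi> ` (convex hull S)"

end

theory Submission
  imports Defs
begin

lemma phi0:
  assumes hom: "\<And>x t. t \<ge> 0 \<Longrightarrow> \<Phi> (t *\<^sub>R x) = t * \<Phi> x"
  shows "\<Phi> (0::'a::euclidean_space) = 0"
  using hom[of 0 0] by simp

lemma rho_scale:
  fixes \<Phi> :: "'a::euclidean_space \<Rightarrow> real"
  assumes hom: "\<And>x t. t \<ge> 0 \<Longrightarrow> \<Phi> (t *\<^sub>R x) = t * \<Phi> x"
    and z: "\<And>x. \<Phi> x = 0 \<longleftrightarrow> x = 0"
    and "t > 0" "x \<noteq> 0"
  shows "rho \<Phi> (t *\<^sub>R x) = rho \<Phi> x"
  using assms hom[of t x] z[of x] by (auto simp: rho_def)

lemma rho_id: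
  fixes \<Phi> :: "'a::euclidean_space \<Rightarrow> real"
  assumes hom: "\<And>x t. t \<ge> 0 \<Longrightarrow> \<Phi> (t *\<^sub>R x) = t * \<Phi> x"
    and "\<Phi> x = 1"
  shows "rho \<Phi> x = x"
  using assms phi0[OF hom] by (auto simp: rho_def)

lemma rho_decomp:
  fixes \<Phi> :: "'a::euclidean_space \<Rightarrow> real"
  assumes nn: "\<And>x. \<Phi> x \<ge> 0"
    and z: "\<And>x. \<Phi> x = 0 \<longleftrightarrow> x = 0"
    and "x \<noteq> 0"
  shows "\<Phi> x > 0 \<and> x = \<Phi> x *\<^sub>R rho \<Phi> x"
proof -
  have "\<Phi> x > 0" using nn[of x] z[of x] assms(3) by linarith
  then show ?thesis using assms(3) by (simp add: rho_def)
qed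

lemma key:
  fixes \<Phi> :: "'a::euclidean_space \<Rightarrow> real"
  assumes nn: "\<And>x. \<Phi> x \<ge> 0"
    and hom: "\<And>x t. t \<ge> 0 \<Longrightarrow> \<Phi> (t *\<^sub>R x) = t * \<Phi> x"
    and z: "\<And>x. \<Phi> x = 0 \<longleftrightarrow> x = 0"
    and sc: "s_convex \<Phi> C"
    and c: "c1 \<in> C" "c2 \<in> C" and ab: "\<alpha> > 0" "\<beta> > 0"
  shows "\<exists>s\<in>C. \<exists>t>0. \<alpha> *\<^sub>R c1 + \<beta> *\<^sub>R c2 = t *\<^sub>R s"
proof -
  define l where "l = \<alpha> / (\<alpha> + \<beta>)"
  have l: "l \<in> {0..1}" using ab by (auto simp: l_def)
  define w where "w = l *\<^sub>R c1 + (1 - l) *\<^sub>R c2"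
  have sC: "rho \<Phi> w \<in> C" using sc c l by (auto simp: s_convex_def scomb_def w_def)
  have CS: "C \<subseteq> sph \<Phi>" using sc by (auto simp: s_convex_def)
  have "w \<noteq> 0"
  proof
    assume "w = 0"
    then have "rho \<Phi> w = 0" by (simp add: rho_def)
    then have "(0::'a) \<in> sph \<Phi>" using sC CS by auto
    then show False using phi0[OF hom] by (simp add: sph_def)
  qed
  from rho_decomp[OF nn z this] have w: "\<Phi> w > 0" "w = \<Phi> w *\<^sub>R rho \<Phi> w" by auto
  have e1: "(\<alpha> + \<beta>) * l = \<alpha>" "(\<alpha> + \<beta>) * (1 - l) = \<beta>"
    using ab by (auto simp: l_def field_simps)
  have "\<alpha> *\<^sub>R c1 + \<beta> *\<^sub>R c2 = (\<alpha> + \<beta>) *\<^sub>R w"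
    unfolding w_def scaleR_add_right scaleR_scaleR e1 ..
  also have "\<dots> = ((\<alpha> + \<beta>) * \<Phi> w) *\<^sub>R rho \<Phi> w" using w(2) by (metis scaleR_scaleR)
  finally have "\<alpha> *\<^sub>R c1 + \<beta> *\<^sub>R c2 = ((\<alpha> + \<beta>) * \<Phi> w) *\<^sub>R rho \<Phi> w" .
  moreover have "(\<alpha> + \<beta>) * \<Phi> w > 0" using ab w(1) by simp
  ultimately show ?thesis using sC by blast
qed

lemma convex_cone_pos:
  fixes D :: "'a::real_vector set"
  assumes "convex D"
  shows "convex {t *\<^sub>R y | t y. t > 0 \<and> y \<in> D}"
proof (rule convexI)
  fix x y :: 'a and u v :: real
  assume x: "x \<in> {t *\<^sub>R y | t y. t > 0 \<and> y \<in> D}" and y: "y \<in> {t *\<^sub>R y | t y. t > 0 \<and> y \<in> D}"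
    and uv0: "0 \<le> u" "0 \<le> v" "u + v = 1"
  have uv: "0 \<le> u \<and> 0 \<le> v \<and> u + v = 1" using uv0 by auto
  obtain t1 y1 where 1: "x = t1 *\<^sub>R y1" "t1 > 0" "y1 \<in> D" using x by auto
  obtain t2 y2 where 2: "y = t2 *\<^sub>R y2" "t2 > 0" "y2 \<in> D" using y by auto
  show "u *\<^sub>R x + v *\<^sub>R y \<in> {t *\<^sub>R y | t y. t > 0 \<and> y \<in> D}"
  proof (cases "u = 0")
    case True then show ?thesis using uv y by auto
  next
    case u: False
    show ?thesis
    proof (cases "v = 0")
      case True then show ?thesis using uv x by auto
    next
      case v: False
      define T where "T = u * t1 + v * t2"
      have T: "T > 0" using u v uv 1 2 unfolding T_def
        by (simp add: add_pos_pos)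
      have m: "(u * t1 / T) *\<^sub>R y1 + (v * t2 / T) *\<^sub>R y2 \<in> D"
      proof (rule convexD[OF assms 1(3) 2(3)])
        show "0 \<le> u * t1 / T" "0 \<le> v * t2 / T" using uv 1 2 T by auto
        show "u * t1 / T + v * t2 / T = 1" using T unfolding T_def by (simp add: add_divide_distrib[symmetric])
      qed
      have "u *\<^sub>R x + v *\<^sub>R y = T *\<^sub>R ((u * t1 / T) *\<^sub>R y1 + (v * t2 / T) *\<^sub>R y2)"
        using T 1 2 by (simp add: scaleR_add_right)
      then show ?thesis using m T by blast
    qed
  qed
qed

theorem mainTheorem17:
  fixes \<Phi> :: "'a::euclidean_space \<Rightarrow> real" and C :: "'a set"
  assumes "DIM('a) \<ge> 2"
    and cont: "continuous_on UNIV \<Phi>"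
    and nn: "\<And>x. \<Phi> x \<ge> 0"
    and hom: "\<And>x t. t \<ge> 0 \<Longrightarrow> \<Phi> (t *\<^sub>R x) = t * \<Phi> x"
    and z: "\<And>x. \<Phi> x = 0 \<longleftrightarrow> x = 0"
    and Cne: "C \<noteq> {}"
    and CS: "C \<subseteq> sph \<Phi>"
    and Ccl: "closedin (top_of_set (sph \<Phi>)) C"
    and sc: "s_convex \<Phi> C"
  shows "sext \<Phi> C \<noteq> {} \<and> hull_addible \<Phi> (sext \<Phi> C) \<and> C = sco \<Phi> (sext \<Phi> C)"
proof -
  have C1: "\<Phi> c = 1" if "c \<in> C" for c using CS that by (auto simp: sph_def)
  have Cnz: "c \<noteq> 0" if "c \<in> C" for c using C1[OF that] phi0[OF hom] by auto
  obtain x0 where x0: "x0 \<in> sphere (0::'a) 1" "\<And>y. y \<in> sphere 0 1 \<Longrightarrow> \<Phi> x0 \<le> \<Phi> y"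
  proof -
    have "sphere (0::'a) 1 \<noteq> {}" by simp
    moreover have "continuous_on (sphere (0::'a) 1) \<Phi>" using continuous_on_subset[OF cont] by blast
    ultimately show ?thesis using continuous_attains_inf[of "sphere (0::'a) 1" \<Phi>] that
      using compact_sphere by blast
  qed
  define m where "m = \<Phi> x0"
  have m: "m > 0" using x0(1) nn[of x0] z[of x0] unfolding m_def by fastforce
  have mb: "m * norm x \<le> \<Phi> x" for x
  proof (cases "x = 0")
    case True then show ?thesis using phi0[OF hom] by simp
  next
    case False
    have "x = norm x *\<^sub>R (x /\<^sub>R norm x)" using False by simp
    then have "\<Phi> x = norm x * \<Phi> (x /\<^sub>R norm x)" using hom[of "norm x" "x /\<^sub>R norm x"] by simp
    moreover have "m \<le> \<Phi> (x /\<^sub>R norm x)" unfolding m_def using x0(2)[of "x /\<^sub>R norm x"] False by simp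
    ultimately show ?thesis using mult_left_mono[of m "\<Phi> (x /\<^sub>R norm x)" "norm x"]
      by (simp add: mult.commute)
  qed
  have "sph \<Phi> \<subseteq> cball 0 (1/m)"
  proof
    fix x assume "x \<in> sph \<Phi>"
    then have "m * norm x \<le> 1" using mb[of x] by (simp add: sph_def)
    then show "x \<in> cball 0 (1/m)" using m by (simp add: field_simps)
  qed
  then have bs: "bounded (sph \<Phi>)" using bounded_cball bounded_subset by blast
  have cls: "closed (sph \<Phi>)" unfolding sph_def using closed_Collect_eq[OF cont continuous_on_const] .
  have Ccomp: "compact C"
    using closedin_closed_trans[OF Ccl cls] bounded_subset[OF bs CS] compact_eq_bounded_closed by blast
  define P where "P = {t *\<^sub>R c | t c. t > 0 \<and> c \<in> C}"
  have Pconv: "convex P" unfolding P_def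
  proof (rule convexI)
    fix x y :: 'a and u v :: real
    assume x: "x \<in> {t *\<^sub>R c | t c. t > 0 \<and> c \<in> C}" and y: "y \<in> {t *\<^sub>R c | t c. t > 0 \<and> c \<in> C}"
      and uv: "0 \<le> u" "0 \<le> v" "u + v = 1"
    obtain t1 y1 where 1: "x = t1 *\<^sub>R y1" "t1 > 0" "y1 \<in> C" using x by auto
    obtain t2 y2 where 2: "y = t2 *\<^sub>R y2" "t2 > 0" "y2 \<in> C" using y by auto
    show "u *\<^sub>R x + v *\<^sub>R y \<in> {t *\<^sub>R c | t c. t > 0 \<and> c \<in> C}"
    proof (cases "u = 0")
      case True then show ?thesis using uv y by auto
    next
      case u: False
      show ?thesis
      proof (cases "v = 0")
        case True then show ?thesis using uv x by auto
      next
        case v: False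
        have "u * t1 > 0" "v * t2 > 0" using u v uv 1 2 by auto
        from key[OF nn hom z sc 1(3) 2(3) this] obtain s t where "s \<in> C" "t > 0"
          "(u * t1) *\<^sub>R y1 + (v * t2) *\<^sub>R y2 = t *\<^sub>R s" by blast
        moreover have "u *\<^sub>R x + v *\<^sub>R y = (u * t1) *\<^sub>R y1 + (v * t2) *\<^sub>R y2"
          using 1 2 by simp
        ultimately have "u *\<^sub>R x + v *\<^sub>R y = t *\<^sub>R s \<and> t > 0 \<and> s \<in> C" by simp
        then show ?thesis by blast
      qed
    qed
  qed
  have CP: "C \<subseteq> P"
  proof
    fix c assume "c \<in> C"
    then have "c = 1 *\<^sub>R c \<and> (1::real) > 0 \<and> c \<in> C" by simp
    then show "c \<in> P" unfolding P_def by blast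
  qed
  have P0: "0 \<notin> P"
  proof
    assume "0 \<in> P"
    then obtain t c where "0 = t *\<^sub>R c" "t > 0" "c \<in> C" unfolding P_def by blast
    then show False using Cnz by simp
  qed
  have hullP: "convex hull C \<subseteq> P" using Pconv CP by (simp add: hull_minimal)
  have h0: "0 \<notin> convex hull C" using hullP P0 by auto
  have rhoP: "rho \<Phi> y \<in> C" if yP: "y \<in> P" for y
  proof -
    obtain t c where "y = t *\<^sub>R c" "t > 0" "c \<in> C" using yP unfolding P_def by blast
    then show ?thesis using rho_scale[OF hom z, of t c] Cnz[of c] rho_id[OF hom C1[of c]] by simp
  qed
  have "compact (convex hull C)" using compact_convex_hull[OF Ccomp] .
  then obtain a b where ab: "0 < b" "\<And>x. x \<in> convex hull C \<Longrightarrow> inner a x > b"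
    using separating_hyperplane_closed_0[of "convex hull C"] h0 compact_imp_closed convex_convex_hull by metis
  have fpos: "inner a c > 0" if "c \<in> C" for c using ab that hull_subset[of C convex] by force
  define g where "g x = x /\<^sub>R (inner a x)" for x
  define B where "B = g ` C"
  have gscale: "g (t *\<^sub>R x) = g x" if "t > 0" for t x
    using that by (simp add: g_def inner_scaleR_right)
  have gf: "inner a (g c) = 1" if "c \<in> C" for c
    using fpos[OF that] by (simp add: g_def inner_scaleR_right)
  have Bconv: "convex B" unfolding B_def
  proof (rule convexI)
    fix x y :: 'a and u v :: real
    assume x: "x \<in> g ` C" and y: "y \<in> g ` C"
      and uv: "0 \<le> u" "0 \<le> v" "u + v = 1"
    obtain c1 where 1: "x = g c1" "c1 \<in> C" using x by auto
    obtain c2 where 2: "y = g c2" "c2 \<in> C" using y by auto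
    show "u *\<^sub>R x + v *\<^sub>R y \<in> g ` C"
    proof (cases "u = 0")
      case True then have "v = 1" using uv by simp
      then show ?thesis using True y by simp
    next
      case u: False
      show ?thesis
      proof (cases "v = 0")
        case True then have "u = 1" using uv by simp
        then show ?thesis using True x by simp
      next
        case v: False
        have "u > 0" "v > 0" using u v uv by auto
        then have p: "u / inner a c1 > 0" "v / inner a c2 > 0"
          using fpos[OF 1(2)] fpos[OF 2(2)] by (auto intro: divide_pos_pos)
        from key[OF nn hom z sc 1(2) 2(2) this] obtain s t where st: "s \<in> C" "t > 0"
          "(u / inner a c1) *\<^sub>R c1 + (v / inner a c2) *\<^sub>R c2 = t *\<^sub>R s" by blast
        have ex: "u *\<^sub>R x = (u / inner a c1) *\<^sub>R c1" unfolding 1 g_def scaleR_scaleR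
          by (simp add: divide_inverse)
        have ey: "v *\<^sub>R y = (v / inner a c2) *\<^sub>R c2" unfolding 2 g_def scaleR_scaleR
          by (simp add: divide_inverse)
        have e: "u *\<^sub>R x + v *\<^sub>R y = t *\<^sub>R s"
          unfolding ex ey by (rule st(3))
        have "inner a (u *\<^sub>R x + v *\<^sub>R y) = u * inner a x + v * inner a y"
          by (simp add: inner_add_right inner_scaleR_right)
        also have "\<dots> = 1" using gf[OF 1(2)] gf[OF 2(2)] 1(1) 2(1) uv(3) by simp
        finally have "inner a (t *\<^sub>R s) = 1" unfolding e .
        then have "t * inner a s = 1" by (simp add: inner_scaleR_right)
        then have "inner a s = inverse t" using st(2) by (simp add: field_simps)
        then have "t *\<^sub>R s = g s" using st(2) by (simp add: g_def)
        then show ?thesis using e st(1) by auto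
      qed
    qed
  qed
  have "continuous_on C g" unfolding g_def
    using fpos by (auto intro!: continuous_intros dest: fpos)
  then have Bcomp: "compact B" unfolding B_def using compact_continuous_image Ccomp by blast
  define E where "E = {x. x extreme_point_of B}"
  have BE: "B = convex hull E" unfolding E_def using Krein_Milman_Minkowski[OF Bcomp Bconv] .
  have ES: "E \<subseteq> g ` sext \<Phi> C"
  proof
    fix x assume "x \<in> E"
    then have ex: "x extreme_point_of B" by (simp add: E_def)
    then obtain c where c: "x = g c" "c \<in> C" unfolding extreme_point_of_def B_def by auto
    have "c \<in> sext \<Phi> C" unfolding sext_def
    proof (intro CollectI conjI ballI impI c(2))
      fix x1 x2 l assume x12: "x1 \<in> C" "x2 \<in> C" and l: "l \<in> {0<..<1::real}"
        and ceq: "c = scomb \<Phi> l x1 x2"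
      show "x1 = x2"
      proof (rule ccontr)
        assume ne: "x1 \<noteq> x2"
        define w where "w = l *\<^sub>R x1 + (1 - l) *\<^sub>R x2"
        have cw: "c = rho \<Phi> w" using ceq by (simp add: scomb_def w_def)
        have "w \<noteq> 0" using cw Cnz[OF c(2)] by (auto simp: rho_def)
        from rho_decomp[OF nn z this] cw have wd: "\<Phi> w > 0" "w = \<Phi> w *\<^sub>R c" by auto
        have gcw: "g c = g w" using gscale[OF wd(1), of c] wd(2) by simp
        define F where "F = inner a w"
        have F: "F = l * inner a x1 + (1 - l) * inner a x2"
          by (simp add: F_def w_def inner_add_right inner_scaleR_right)
        have f1: "inner a x1 > 0" and f2: "inner a x2 > 0" using fpos x12 by auto
        have Fp: "F > 0" using F l f1 f2 by (auto intro: add_pos_pos)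
        define u where "u = (1 - l) * inner a x2 / F"
        have u0: "0 < u" using l f2 Fp unfolding u_def by (auto intro!: divide_pos_pos)
        have "l * inner a x1 > 0" using l f1 by auto
        then have "(1 - l) * inner a x2 < F" using F by linarith
        then have u1': "u < 1" using Fp unfolding u_def by simp
        have u1: "1 - u = l * inner a x1 / F"
        proof -
          have "1 - u = (F - (1 - l) * inner a x2) / F" using Fp by (simp add: u_def diff_divide_distrib)
          then show ?thesis using F by simp
        qed
        have gw: "g w = (l / F) *\<^sub>R x1 + ((1 - l) / F) *\<^sub>R x2"
          by (simp add: g_def F_def[symmetric]) (simp add: w_def scaleR_add_right divide_inverse_commute mult.commute)
        have t1: "(1 - u) *\<^sub>R g x1 = (l / F) *\<^sub>R x1" unfolding u1 g_def using f1 by simp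
        have t2: "u *\<^sub>R g x2 = ((1 - l) / F) *\<^sub>R x2" unfolding u_def g_def using f2 by simp
        have "g w = (1 - u) *\<^sub>R g x1 + u *\<^sub>R g x2" using gw t1 t2 by simp
        moreover have "g x1 \<noteq> g x2"
        proof
          assume "g x1 = g x2"
          then have "inner a x1 *\<^sub>R g x1 = inner a x1 *\<^sub>R g x2" by simp
          then have "x1 = (inner a x1 / inner a x2) *\<^sub>R x2" using f1 f2
            by (simp add: g_def divide_inverse)
          moreover have "inner a x1 / inner a x2 \<ge> 0" using f1 f2 by simp
          ultimately have "\<Phi> x1 = (inner a x1 / inner a x2) * \<Phi> x2" using hom[of "inner a x1 / inner a x2" x2] by simp
          then have "inner a x1 / inner a x2 = 1" using C1 x12 by simp
          then have "x1 = x2" using \<open>x1 = _\<close> by simp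
          then show False using ne by simp
        qed
        ultimately have "x \<in> open_segment (g x1) (g x2)" using u0 u1' c(1) gcw by (auto simp: in_segment)
        moreover have "g x1 \<in> B" "g x2 \<in> B" using x12 by (auto simp: B_def)
        ultimately show False using ex unfolding extreme_point_of_def by blast
      qed
    qed
    then show "x \<in> g ` sext \<Phi> C" using c by auto
  qed
  have sextC: "sext \<Phi> C \<subseteq> C" unfolding sext_def by (rule Collect_restrict)
  have "B \<noteq> {}" using Cne by (simp add: B_def)
  then have "E \<noteq> {}" using BE by (metis convex_hull_empty)
  then have ne: "sext \<Phi> C \<noteq> {}" using ES by blast
  have hconv: "convex hull sext \<Phi> C \<subseteq> convex hull C" using sextC by (simp add: hull_mono)
  have ha: "hull_addible \<Phi> (sext \<Phi> C)"
    unfolding hull_addible_def using ne sextC CS h0 hconv by blast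
  define Q where "Q = {t *\<^sub>R y | t y. t > 0 \<and> y \<in> convex hull sext \<Phi> C}"
  have Qc: "convex Q" unfolding Q_def by (rule convex_cone_pos) (rule convex_convex_hull)
  have gQ: "g ` sext \<Phi> C \<subseteq> Q"
  proof
    fix x assume "x \<in> g ` sext \<Phi> C"
    then obtain s where s: "x = g s" "s \<in> sext \<Phi> C" by blast
    have "s \<in> C" using sextC s(2) by blast
    then have "inverse (inner a s) > 0" using fpos by simp
    moreover have "s \<in> convex hull sext \<Phi> C" using s(2) by (rule hull_subset[THEN subsetD])
    ultimately have "x = inverse (inner a s) *\<^sub>R s \<and> inverse (inner a s) > 0 \<and> s \<in> convex hull sext \<Phi> C"
      using s(1) by (simp add: g_def)
    then show "x \<in> Q" unfolding Q_def by blast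
  qed
  have "convex hull (g ` sext \<Phi> C) \<subseteq> Q" using hull_minimal[of _ _ convex, OF gQ Qc] .
  then have BQ: "B \<subseteq> Q" unfolding BE using hull_mono[OF ES] by (rule order_trans[rotated])
  have "C \<subseteq> sco \<Phi> (sext \<Phi> C)"
  proof
    fix c assume c: "c \<in> C"
    have "g c \<in> Q" using BQ c by (auto simp: B_def)
    then obtain t y where ty: "g c = t *\<^sub>R y" "t > 0" "y \<in> convex hull sext \<Phi> C"
      unfolding Q_def by auto
    have y0: "y \<noteq> 0" using ty(3) hconv h0 by auto
    have "c = rho \<Phi> c" using rho_id[OF hom C1[OF c]] by simp
    also have "\<dots> = rho \<Phi> (g c)" unfolding g_def
      using rho_scale[OF hom z, of "inverse (inner a c)" c] fpos[OF c] Cnz[OF c] by simp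
    also have "\<dots> = rho \<Phi> y" using ty rho_scale[OF hom z, of t y] y0 by simp
    finally show "c \<in> sco \<Phi> (sext \<Phi> C)" unfolding sco_def using ty(3) by blast
  qed
  moreover have "sco \<Phi> (sext \<Phi> C) \<subseteq> C"
    unfolding sco_def using hconv hullP rhoP by blast
  ultimately show ?thesis using ne ha by blast
qed

end
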